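(* Let $L\colon \widehat{\Delta}\to\widehat{\Box}$ be the functor given by $L(X)([1]^n) = \int^{[m]\in\Delta} X_m \times \mathbf{Poset}([1]^n,[m])$. Equivalently, $L$ is the colimit-preserving functor with $L(y[m]) = \mathbf{Poset}(-,[m])|_{\Box}$; it is the leftmost adjoint in the essential geometric embedding $\widehat{\Delta}\to\widehat{\Box}$. Then $L$ preserves monomorphisms.
   Context: $\Delta$ is the simplex category, the full subcategory of $\mathbf{Poset}$ on $[m]=\{0<\dots<m\}$, $m\ge0$. $\Box$ is the full subcategory of $\mathbf{Poset}$ on $[1]^n$, $n \ge 0$. $\widehat{\mathcal{C}}$ denotes presheaves of sets on $\mathcal{C}$ and $y$ is the Yoneda embedding. The functor $L$ is left adjoint to the functor $T\colon\widehat{\Box}\to\widehat{\Delta}$, $T(Y)=\int^{n} Y([1]^n)\times N([1]^n)$, where $N$ denotes the nerve; on representables $T(y[1]^n)=(\Delta^1)^n$. *)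

theory Defs
  imports Main
begin

text \<open>The object [m] has elements {0..m}. A morphism [k] -> [m] is a monotone map,
 represented canonically by a function nat => nat that is 0 outside {0..k}.\<close>

definition dhom :: "nat \<Rightarrow> nat \<Rightarrow> (nat \<Rightarrow> nat) set" where
  "dhom k m = {f. (\<forall>i\<le>k. f i \<le> m) \<and> (\<forall>i j. i \<le> j \<longrightarrow> j \<le> k \<longrightarrow> f i \<le> f j)
                  \<and> (\<forall>i. k < i \<longrightarrow> f i = 0)}"

definition did :: "nat \<Rightarrow> nat \<Rightarrow> nat" where
  "did m = (\<lambda>i. if i \<le> m then i else 0)"

definition dcomp :: "nat \<Rightarrow> (nat \<Rightarrow> nat) \<Rightarrow> (nat \<Rightarrow> nat) \<Rightarrow> nat \<Rightarrow> nat" where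
  "dcomp k g f = (\<lambda>i. if i \<le> k then g (f i) else 0)"

definition sset :: "(nat \<Rightarrow> 'a set) \<Rightarrow> (nat \<Rightarrow> nat \<Rightarrow> (nat \<Rightarrow> nat) \<Rightarrow> 'a \<Rightarrow> 'a) \<Rightarrow> bool" where
  "sset X act \<longleftrightarrow>
     (\<forall>m k f x. f \<in> dhom k m \<longrightarrow> x \<in> X m \<longrightarrow> act m k f x \<in> X k) \<and>
     (\<forall>m x. x \<in> X m \<longrightarrow> act m m (did m) x = x) \<and>
     (\<forall>m k j f g x. f \<in> dhom k m \<longrightarrow> g \<in> dhom j k \<longrightarrow> x \<in> X m \<longrightarrow>
        act k j g (act m k f x) = act m j (dcomp j f g) x)"

definition sset_hom ::
  "(nat \<Rightarrow> 'a set) \<Rightarrow> (nat \<Rightarrow> nat \<Rightarrow> (nat \<Rightarrow> nat) \<Rightarrow> 'a \<Rightarrow> 'a) \<Rightarrow>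
   (nat \<Rightarrow> 'b set) \<Rightarrow> (nat \<Rightarrow> nat \<Rightarrow> (nat \<Rightarrow> nat) \<Rightarrow> 'b \<Rightarrow> 'b) \<Rightarrow>
   (nat \<Rightarrow> 'a \<Rightarrow> 'b) \<Rightarrow> bool" where
  "sset_hom X actX Y actY h \<longleftrightarrow>
     (\<forall>m x. x \<in> X m \<longrightarrow> h m x \<in> Y m) \<and>
     (\<forall>m k f x. f \<in> dhom k m \<longrightarrow> x \<in> X m \<longrightarrow> h k (actX m k f x) = actY m k f (h m x))"

definition sset_mono ::
  "(nat \<Rightarrow> 'a set) \<Rightarrow> (nat \<Rightarrow> nat \<Rightarrow> (nat \<Rightarrow> nat) \<Rightarrow> 'a \<Rightarrow> 'a) \<Rightarrow>
   (nat \<Rightarrow> 'b set) \<Rightarrow> (nat \<Rightarrow> nat \<Rightarrow> (nat \<Rightarrow> nat) \<Rightarrow> 'b \<Rightarrow> 'b) \<Rightarrow>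
   (nat \<Rightarrow> 'a \<Rightarrow> 'b) \<Rightarrow> bool" where
  "sset_mono X actX Y actY h \<longleftrightarrow> sset_hom X actX Y actY h \<and> (\<forall>m. inj_on (h m) (X m))"

text \<open>[1]^n has elements the boolean lists of length n, ordered componentwise.
  A poset map [1]^n -> [m] is a monotone map, represented canonically by a
  function that is 0 off the lists of length n.\<close>

definition cube :: "nat \<Rightarrow> bool list set" where
  "cube n = {xs. length xs = n}"

definition cube_le :: "bool list \<Rightarrow> bool list \<Rightarrow> bool" where
  "cube_le xs ys \<longleftrightarrow> list_all2 (\<le>) xs ys"

definition chom :: "nat \<Rightarrow> nat \<Rightarrow> (bool list \<Rightarrow> nat) set" where
  "chom n m = {f. (\<forall>xs \<in> cube n. f xs \<le> m) \<and>
                  (\<forall>xs \<in> cube n. \<forall>ys \<in> cube n. cube_le xs ys \<longrightarrow> f xs \<le> f ys) \<and>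
                  (\<forall>xs. xs \<notin> cube n \<longrightarrow> f xs = 0)}"

definition cdcomp :: "nat \<Rightarrow> (nat \<Rightarrow> nat) \<Rightarrow> (bool list \<Rightarrow> nat) \<Rightarrow> bool list \<Rightarrow> nat" where
  "cdcomp n g f = (\<lambda>xs. if xs \<in> cube n then g (f xs) else 0)"

definition coend_carrier ::
  "(nat \<Rightarrow> 'a set) \<Rightarrow> nat \<Rightarrow> (nat \<times> 'a \<times> (bool list \<Rightarrow> nat)) set" where
  "coend_carrier X n = {(m, x, f). x \<in> X m \<and> f \<in> chom n m}"

definition coend_gen ::
  "(nat \<Rightarrow> 'a set) \<Rightarrow> (nat \<Rightarrow> nat \<Rightarrow> (nat \<Rightarrow> nat) \<Rightarrow> 'a \<Rightarrow> 'a) \<Rightarrow> nat \<Rightarrow>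
   ((nat \<times> 'a \<times> (bool list \<Rightarrow> nat)) \<times> (nat \<times> 'a \<times> (bool list \<Rightarrow> nat))) set" where
  "coend_gen X act n =
     {((m, act k m g x, f), (k, x, cdcomp n g f)) | m k g x f.
        g \<in> dhom m k \<and> x \<in> X k \<and> f \<in> chom n m}"

definition coend_rel ::
  "(nat \<Rightarrow> 'a set) \<Rightarrow> (nat \<Rightarrow> nat \<Rightarrow> (nat \<Rightarrow> nat) \<Rightarrow> 'a \<Rightarrow> 'a) \<Rightarrow> nat \<Rightarrow>
   ((nat \<times> 'a \<times> (bool list \<Rightarrow> nat)) \<times> (nat \<times> 'a \<times> (bool list \<Rightarrow> nat))) set" where
  "coend_rel X act n = Id_on (coend_carrier X n) \<union> (coend_gen X act n \<union> (coend_gen X act n)\<inverse>)\<^sup>+"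

definition Lobj ::
  "(nat \<Rightarrow> 'a set) \<Rightarrow> (nat \<Rightarrow> nat \<Rightarrow> (nat \<Rightarrow> nat) \<Rightarrow> 'a \<Rightarrow> 'a) \<Rightarrow> nat \<Rightarrow>
   (nat \<times> 'a \<times> (bool list \<Rightarrow> nat)) set set" where
  "Lobj X act n = coend_carrier X n // coend_rel X act n"

definition Lmap ::
  "(nat \<Rightarrow> 'b set) \<Rightarrow> (nat \<Rightarrow> nat \<Rightarrow> (nat \<Rightarrow> nat) \<Rightarrow> 'b \<Rightarrow> 'b) \<Rightarrow> (nat \<Rightarrow> 'a \<Rightarrow> 'b) \<Rightarrow> nat \<Rightarrow>
   (nat \<times> 'a \<times> (bool list \<Rightarrow> nat)) set \<Rightarrow> (nat \<times> 'b \<times> (bool list \<Rightarrow> nat)) set" where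
  "Lmap Y actY h n C = (\<Union>(m, x, f) \<in> C. coend_rel Y actY n `` {(m, h m x, f)})"

end

theory Submission
  imports Defs
begin

lemma smono_id:
  assumes "strict_mono_on {0..a} g" "\<forall>i\<le>a. g i \<le> (a::nat)"
  shows "\<forall>i\<le>a. g i = i"
proof -
  have lo: "i \<le> g i" if "i \<le> a" for i using that
  proof (induction i)
    case 0 then show ?case by simp
  next
    case (Suc i)
    then have "g i < g (Suc i)" using assms(1) by (auto simp: strict_mono_on_def)
    with Suc show ?case by simp
  qed
  have hi: "d \<le> a \<longrightarrow> g (a - d) \<le> a - d" for d
  proof (induction d)
    case 0 then show ?case using assms(2) by simp
  next
    case (Suc d)
    show ?case
    proof
      assume "Suc d \<le> a"
      then have "g (a - Suc d) < g (a - d)" using assms(1) by (auto simp: strict_mono_on_def)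
      with Suc \<open>Suc d \<le> a\<close> show "g (a - Suc d) \<le> a - Suc d" by simp
    qed
  qed
  show ?thesis
  proof (intro allI impI)
    fix i assume "i \<le> a"
    with hi[of "a - i"] lo[of i] show "g i = i" by simp
  qed
qed

lemma enum_exists:
  assumes "finite (S::nat set)" "S \<noteq> {}"
  shows "\<exists>(a::nat) e. strict_mono_on {0..a} e \<and> e ` {0..a} = S \<and> (\<forall>i. a < i \<longrightarrow> e i = 0)"
  using assms
proof (induction "card S" arbitrary: S)
  case 0 then show ?case by simp
next
  case (Suc c)
  define M where "M = Max S"
  have M: "M \<in> S" "\<forall>x\<in>S. x \<le> M" using Suc.prems by (auto simp: M_def)
  show ?case
  proof (cases "S - {M} = {}")
    case True
    then have SM: "S = {M}" using M by auto
    define e where "e = (\<lambda>i::nat. if i = 0 then M else 0)"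
    have "strict_mono_on {0..0} e"
    proof (rule strict_mono_onI)
      fix r s :: nat assume "r \<in> {0..0}" "s \<in> {0..0}" "r < s"
      then have False by simp
      then show "e r < e s" ..
    qed
    moreover have "e ` {0..0} = S" using SM by (simp add: e_def)
    moreover have "\<forall>i. 0 < i \<longrightarrow> e i = 0" by (simp add: e_def)
    ultimately show ?thesis by blast
  next
    case False
    have cS: "c = card (S - {M})" using Suc.hyps(2) M Suc.prems(1) by simp
    have "finite (S - {M})" using Suc.prems(1) by simp
    from Suc.hyps(1)[OF cS this False] obtain a :: nat and e where
      e: "strict_mono_on {0..a} e" "e ` {0..a} = S - {M}" "\<forall>i. a < i \<longrightarrow> e i = 0" by blast
    have lt: "e i < M" if "i \<le> a" for i
    proof -
      have "e i \<in> S - {M}" using e(2) that by auto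
      with M show ?thesis by fastforce
    qed
    define e' where "e' = (\<lambda>i. if i \<le> a then e i else if i = Suc a then M else 0)"
    have "strict_mono_on {0..Suc a} e'"
    proof (rule strict_mono_onI)
      fix r s assume rs: "r \<in> {0..Suc a}" "s \<in> {0..Suc a}" "r < s"
      show "e' r < e' s"
      proof (cases "s \<le> a")
        case True
        then have "e r < e s" using rs e(1) by (auto intro: strict_mono_onD)
        then show ?thesis using True rs by (simp add: e'_def)
      next
        case False
        then have "s = Suc a" using rs by simp
        then show ?thesis using lt rs by (simp add: e'_def)
      qed
    qed
    moreover have "e' ` {0..Suc a} = S"
    proof -
      have "{0..Suc a} = insert (Suc a) {0..a}" by auto
      moreover have "e' ` {0..a} = e ` {0..a}" by (auto simp: e'_def)
      moreover have "e' (Suc a) = M" by (simp add: e'_def)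
      ultimately have "e' ` {0..Suc a} = insert M (e ` {0..a})" by (metis image_insert)
      then show ?thesis using e(2) M by auto
    qed
    moreover have "\<forall>i. Suc a < i \<longrightarrow> e' i = 0" by (simp add: e'_def)
    ultimately show ?thesis by blast
  qed
qed

lemma smono_same_image:
  assumes "strict_mono_on {0..a} e" "strict_mono_on {0..a'} e'" "e ` {0..a} = e' ` {0..(a'::nat)}"
  shows "a = a' \<and> (\<forall>i\<le>a. e i = (e' i::nat))"
proof -
  have ie: "inj_on e {0..a}" "inj_on e' {0..a'}" using assms strict_mono_on_imp_inj_on by blast+
  have "card (e ` {0..a}) = Suc a" "card (e' ` {0..a'}) = Suc a'" using ie by (simp_all add: card_image)
  then have aa: "a = a'" using assms(3) by simp
  define g where "g = (\<lambda>i. inv_into {0..a} e' (e i))"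
  have ge: "e' (g i) = e i" "g i \<in> {0..a}" if "i \<le> a" for i
  proof -
    have "e i \<in> e' ` {0..a}" using that assms(3) aa by auto
    then show "e' (g i) = e i" unfolding g_def by (rule f_inv_into_f)
    show "g i \<in> {0..a}" unfolding g_def by (rule inv_into_into) fact
  qed
  have "strict_mono_on {0..a} g"
  proof (rule strict_mono_onI)
    fix r s assume rs: "r \<in> {0..a}" "s \<in> {0..a}" "r < s"
    then have "e r < e s" using assms(1) by (auto simp: strict_mono_on_def)
    then have "e' (g r) < e' (g s)" using ge rs by simp
    moreover have "g r \<in> {0..a'}" "g s \<in> {0..a'}" using ge rs aa by auto
    ultimately show "g r < g s" using assms(2)
      by (metis linorder_neqE_nat order_less_asym' strict_mono_onD)
  qed
  moreover have "\<forall>i\<le>a. g i \<le> a" using ge by simp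
  ultimately have gi: "\<forall>i\<le>a. g i = i" by (rule smono_id)
  have "\<forall>i\<le>a. e i = e' i"
  proof (intro allI impI)
    fix i assume "i \<le> a"
    then have "e' (g i) = e i" "g i = i" using ge gi by auto
    then show "e i = e' i" by simp
  qed
  then show ?thesis using aa by simp
qed

definition surjd :: "nat \<Rightarrow> nat \<Rightarrow> (nat \<Rightarrow> nat) \<Rightarrow> bool" where
  "surjd k j s \<longleftrightarrow> s \<in> dhom k j \<and> s ` {0..k} = {0..j}"
definition injd :: "nat \<Rightarrow> nat \<Rightarrow> (nat \<Rightarrow> nat) \<Rightarrow> bool" where
  "injd a m e \<longleftrightarrow> e \<in> dhom a m \<and> inj_on e {0..a}"
definition surjc :: "nat \<Rightarrow> nat \<Rightarrow> (bool list \<Rightarrow> nat) \<Rightarrow> bool" where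
  "surjc n a f \<longleftrightarrow> f \<in> chom n a \<and> f ` cube n = {0..a}"

lemma dhom_rev: "s \<in> dhom k j \<Longrightarrow> l \<le> k \<Longrightarrow> l' \<le> k \<Longrightarrow> s l < s l' \<Longrightarrow> l < l'"
proof (rule ccontr)
  assume a: "s \<in> dhom k j" "l \<le> k" "l' \<le> k" "s l < s l'" "\<not> l < l'"
  then have "l' \<le> l" by simp
  then have "s l' \<le> s l" using a unfolding dhom_def by blast
  then show False using a(4) by simp
qed

lemma dhom_le: "s \<in> dhom k j \<Longrightarrow> i \<le> k \<Longrightarrow> s i \<le> j"
  unfolding dhom_def by auto
lemma dhom_zero: "s \<in> dhom k j \<Longrightarrow> k < i \<Longrightarrow> s i = 0"
  unfolding dhom_def by auto
lemma dhom_mono: "s \<in> dhom k j \<Longrightarrow> i \<le> i' \<Longrightarrow> i' \<le> k \<Longrightarrow> s i \<le> s i'"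
  unfolding dhom_def by auto
lemma dhom_ext: "s \<in> dhom k j \<Longrightarrow> s' \<in> dhom k j' \<Longrightarrow> (\<And>i. i \<le> k \<Longrightarrow> s i = s' i) \<Longrightarrow> s = s'"
proof (rule ext)
  fix i assume a: "s \<in> dhom k j" "s' \<in> dhom k j'" "\<And>i. i \<le> k \<Longrightarrow> s i = s' i"
  show "s i = s' i"
  proof (cases "i \<le> k")
    case False then show ?thesis using a(1,2) unfolding dhom_def by simp
  qed (use a in simp)
qed

lemma chom_le: "f \<in> chom n m \<Longrightarrow> xs \<in> cube n \<Longrightarrow> f xs \<le> m"
  unfolding chom_def by auto
lemma chom_zero: "f \<in> chom n m \<Longrightarrow> xs \<notin> cube n \<Longrightarrow> f xs = 0"
  unfolding chom_def by auto
lemma chom_mono: "f \<in> chom n m \<Longrightarrow> xs \<in> cube n \<Longrightarrow> ys \<in> cube n \<Longrightarrow> cube_le xs ys \<Longrightarrow> f xs \<le> f ys"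
  unfolding chom_def by auto

lemma cube_ne: "replicate n False \<in> cube n" by (simp add: cube_def)

lemma injd_smono: "injd a m e \<Longrightarrow> strict_mono_on {0..a} e"
proof (rule strict_mono_onI)
  fix r s assume a: "injd a m e" "r \<in> {0..a}" "s \<in> {0..a}" "r < s"
  then have "e r \<le> e s" using dhom_mono[of e a m r s] unfolding injd_def by simp
  moreover have "e r \<noteq> e s"
  proof
    assume "e r = e s"
    then have "r = s" using a(1,2,3) unfolding injd_def inj_on_def by blast
    then show False using a(4) by simp
  qed
  ultimately show "e r < e s" by simp
qed

lemma smono_le_rev:
  assumes "strict_mono_on {0..a} e" "x \<le> a" "y \<le> (a::nat)" "e x \<le> (e y::nat)"
  shows "x \<le> y"
proof (rule ccontr)
  assume "\<not> x \<le> y"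
  then have "y < x" by simp
  then have "e y < e x" using assms(1,2,3) strict_mono_onD[of "{0..a}" e y x] by simp
  then show False using assms(4) by simp
qed

lemma injd_eq: "injd a m e \<Longrightarrow> x \<le> a \<Longrightarrow> y \<le> a \<Longrightarrow> e x = e y \<Longrightarrow> x = y"
  unfolding injd_def inj_on_def by simp

lemma did_dhom: "did m \<in> dhom m m" by (auto simp: dhom_def did_def)
lemma did_surjd: "surjd m m (did m)"
proof -
  have "did m ` {0..m} = {0..m}" by (auto simp: did_def image_iff)
  then show ?thesis using did_dhom by (simp add: surjd_def)
qed

lemma dcomp_dhom: "f \<in> dhom k m \<Longrightarrow> g \<in> dhom m j \<Longrightarrow> dcomp k g f \<in> dhom k j"
  unfolding dhom_def dcomp_def by auto

lemma cdcomp_chom: "f \<in> chom n m \<Longrightarrow> g \<in> dhom m k \<Longrightarrow> cdcomp n g f \<in> chom n k"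
  unfolding chom_def dhom_def cdcomp_def by auto

lemma cdcomp_assoc: "f \<in> chom n a \<Longrightarrow> cdcomp n g (cdcomp n e f) = cdcomp n (dcomp a g e) f"
  unfolding cdcomp_def dcomp_def chom_def by auto

lemma dcomp_assoc: "f \<in> dhom k a \<Longrightarrow> dcomp k g (dcomp k e f) = dcomp k (dcomp a g e) f"
  unfolding dcomp_def dhom_def by auto

lemma surjd_comp: "surjd k j s \<Longrightarrow> surjd j i t \<Longrightarrow> surjd k i (dcomp k t s)"
proof -
  assume a: "surjd k j s" "surjd j i t"
  have "dcomp k t s ` {0..k} = t ` (s ` {0..k})" by (auto simp: dcomp_def image_iff)
  then show ?thesis using a dcomp_dhom by (auto simp: surjd_def)
qed

lemma surjc_comp: "surjc n k f \<Longrightarrow> surjd k j s \<Longrightarrow> surjc n j (cdcomp n s f)"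
proof -
  assume a: "surjc n k f" "surjd k j s"
  have "cdcomp n s f ` cube n = s ` (f ` cube n)" by (auto simp: cdcomp_def image_iff)
  then show ?thesis using a cdcomp_chom by (auto simp: surjd_def surjc_def)
qed

lemma dcomp_section: "d \<in> dhom j k \<Longrightarrow> (\<forall>i\<le>j. s (d i) = i) \<Longrightarrow> dcomp j s d = did j"
  unfolding dcomp_def did_def by auto

lemma section_exists:
  assumes "surjd k j s" "i0 \<le> k"
  shows "\<exists>d. d \<in> dhom j k \<and> (\<forall>i\<le>j. s (d i) = i) \<and> d (s i0) = i0"
proof -
  have sd: "s \<in> dhom k j" and im: "s ` {0..k} = {0..j}" using assms by (auto simp: surjd_def)
  define d where "d = (\<lambda>i. if i \<le> j then (if i = s i0 then i0 else SOME l. l \<le> k \<and> s l = i) else 0)"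
  have pr: "d i \<le> k \<and> s (d i) = i" if "i \<le> j" for i
  proof (cases "i = s i0")
    case True then show ?thesis using that assms by (simp add: d_def)
  next
    case False
    have "i \<in> s ` {0..k}" using im that by auto
    then have "\<exists>l. l \<le> k \<and> s l = i" by auto
    then have "(SOME l. l \<le> k \<and> s l = i) \<le> k \<and> s (SOME l. l \<le> k \<and> s l = i) = i"
      by (rule someI_ex)
    then show ?thesis using that False by (simp add: d_def)
  qed
  have "d \<in> dhom j k"
    unfolding dhom_def
  proof (intro CollectI conjI allI impI)
    fix i assume "i \<le> j" then show "d i \<le> k" using pr by blast
  next
    fix i i' assume "i \<le> i'" "i' \<le> j"
    show "d i \<le> d i'"
    proof (cases "i = i'")
      case False
      then have "s (d i) < s (d i')" using pr \<open>i \<le> i'\<close> \<open>i' \<le> j\<close> by auto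
      moreover have "d i \<le> k" "d i' \<le> k" using pr \<open>i \<le> i'\<close> \<open>i' \<le> j\<close> by auto
      ultimately have "d i < d i'" using dhom_rev[OF sd] by blast
      then show ?thesis by simp
    qed simp
  next
    fix i assume "j < i" then show "d i = 0" by (simp add: d_def)
  qed
  moreover have "s i0 \<le> j" using dhom_le[OF sd assms(2)] .
  ultimately show ?thesis using pr by (auto simp: d_def)
qed

lemma enum_injd:
  assumes "finite S" "S \<noteq> {}" "S \<subseteq> {0..m}"
  shows "\<exists>a e. injd a m e \<and> e ` {0..a} = S"
proof -
  obtain a :: nat and e where e: "strict_mono_on {0..a} e" "e ` {0..a} = S" "\<forall>i. a < i \<longrightarrow> e i = 0"
    using enum_exists[OF assms(1,2)] by blast
  have "e \<in> dhom a m"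
    unfolding dhom_def
  proof (intro CollectI conjI allI impI)
    fix i assume "i \<le> a"
    then have "e i \<in> S" using e(2) by auto
    then show "e i \<le> m" using assms(3) by auto
  next
    fix i i' assume "i \<le> i'" "i' \<le> a" then show "e i \<le> e i'"
    proof (cases "i = i'")
      case False
      then have "i < i'" using \<open>i \<le> i'\<close> by simp
      then show ?thesis using e(1) \<open>i' \<le> a\<close> strict_mono_onD[of "{0..a}" e i i'] by simp
    qed simp
  qed (use e in auto)
  then show ?thesis using e strict_mono_on_imp_inj_on unfolding injd_def by blast
qed

lemma factor_c:
  assumes "f \<in> chom n m"
  shows "\<exists>a e u. surjc n a u \<and> injd a m e \<and> f = cdcomp n e u"
proof -
  have sub: "f ` cube n \<subseteq> {0..m}" using chom_le[OF assms] by auto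
  have fin: "finite (f ` cube n)" using finite_subset[OF sub] by simp
  have ne: "f ` cube n \<noteq> {}" using cube_ne by auto
  obtain a e where e: "injd a m e" "e ` {0..a} = f ` cube n" using enum_injd[OF fin ne sub] by blast
  have sm: "strict_mono_on {0..a} e" using injd_smono[OF e(1)] .
  define u where "u = (\<lambda>xs. if xs \<in> cube n then inv_into {0..a} e (f xs) else 0)"
  have pu: "u xs \<le> a \<and> e (u xs) = f xs" if "xs \<in> cube n" for xs
  proof -
    have m: "f xs \<in> e ` {0..a}" using that e(2) by auto
    have "inv_into {0..a} e (f xs) \<in> {0..a}" by (rule inv_into_into) (rule m)
    moreover have "e (inv_into {0..a} e (f xs)) = f xs" by (rule f_inv_into_f) (rule m)
    ultimately show ?thesis using that by (simp add: u_def)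
  qed
  have "u \<in> chom n a"
    unfolding chom_def
  proof (intro CollectI conjI ballI allI impI)
    fix xs ys assume "xs \<in> cube n" "ys \<in> cube n" "cube_le xs ys"
    then have "f xs \<le> f ys" using chom_mono[OF assms] by auto
    then show "u xs \<le> u ys" using pu[OF \<open>xs \<in> cube n\<close>] pu[OF \<open>ys \<in> cube n\<close>] smono_le_rev[OF sm]
      by simp
  next
    fix xs assume "xs \<in> cube n" then show "u xs \<le> a" using pu by blast
  next
    fix xs assume "xs \<notin> cube n" then show "u xs = 0" by (simp add: u_def)
  qed
  moreover have "u ` cube n = {0..a}"
  proof
    show "u ` cube n \<subseteq> {0..a}" using pu by auto
    show "{0..a} \<subseteq> u ` cube n"
    proof
      fix i assume i: "i \<in> {0..a}"
      then have "e i \<in> f ` cube n" using e(2) by auto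
      then obtain xs where xs: "xs \<in> cube n" "f xs = e i" by auto
      then have "e (u xs) = e i" using pu by auto
      then have "u xs = i" using injd_eq[OF e(1)] i pu xs by simp
      then show "i \<in> u ` cube n" using xs by auto
    qed
  qed
  moreover have "f = cdcomp n e u"
  proof (rule ext)
    fix xs show "f xs = cdcomp n e u xs"
    proof (cases "xs \<in> cube n")
      case True then show ?thesis using pu[OF True] by (simp add: cdcomp_def)
    next
      case False then show ?thesis using chom_zero[OF assms False] by (simp add: cdcomp_def)
    qed
  qed
  ultimately show ?thesis using e(1) unfolding surjc_def by blast
qed

lemma factor_d:
  assumes "c \<in> dhom j m"
  shows "\<exists>a e u. surjd j a u \<and> injd a m e \<and> c = dcomp j e u"
proof -
  have fin: "finite (c ` {0..j})" by simp
  have ne: "c ` {0..j} \<noteq> {}" by auto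
  have sub: "c ` {0..j} \<subseteq> {0..m}" using dhom_le[OF assms] by auto
  obtain a e where e: "injd a m e" "e ` {0..a} = c ` {0..j}" using enum_injd[OF fin ne sub] by blast
  have sm: "strict_mono_on {0..a} e" using injd_smono[OF e(1)] .
  define u where "u = (\<lambda>i. if i \<le> j then inv_into {0..a} e (c i) else 0)"
  have pu: "u i \<le> a \<and> e (u i) = c i" if "i \<le> j" for i
  proof -
    have m: "c i \<in> e ` {0..a}" using that e(2) by auto
    have "inv_into {0..a} e (c i) \<in> {0..a}" by (rule inv_into_into) (rule m)
    moreover have "e (inv_into {0..a} e (c i)) = c i" by (rule f_inv_into_f) (rule m)
    ultimately show ?thesis using that by (simp add: u_def)
  qed
  have "u \<in> dhom j a"
    unfolding dhom_def
  proof (intro CollectI conjI allI impI)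
    fix xs ys assume "xs \<le> ys" "ys \<le> j"
    then have "c xs \<le> c ys" using dhom_mono[OF assms] by auto
    then show "u xs \<le> u ys" using pu[of xs] pu[of ys] \<open>xs \<le> ys\<close> \<open>ys \<le> j\<close> smono_le_rev[OF sm]
      by simp
  next
    fix xs assume "xs \<le> j" then show "u xs \<le> a" using pu by blast
  next
    fix xs assume "j < xs" then show "u xs = 0" by (simp add: u_def)
  qed
  moreover have "u ` {0..j} = {0..a}"
  proof
    show "u ` {0..j} \<subseteq> {0..a}" using pu by auto
    show "{0..a} \<subseteq> u ` {0..j}"
    proof
      fix i assume i: "i \<in> {0..a}"
      then have "e i \<in> c ` {0..j}" using e(2) by auto
      then obtain xs where xs: "xs \<le> j" "c xs = e i" by auto
      then have "e (u xs) = e i" using pu by auto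
      then have "u xs = i" using injd_eq[OF e(1)] i pu xs by simp
      then show "i \<in> u ` {0..j}" using xs by auto
    qed
  qed
  moreover have "c = dcomp j e u"
  proof (rule ext)
    fix xs show "c xs = dcomp j e u xs"
    proof (cases "xs \<le> j")
      case True then show ?thesis using pu[OF True] by (simp add: dcomp_def)
    next
      case False then show ?thesis using dhom_zero[OF assms, of xs] by (simp add: dcomp_def)
    qed
  qed
  ultimately show ?thesis using e(1) unfolding surjd_def by blast
qed

lemma factor_c_unique:
  assumes "surjc n a u" "injd a m e" "surjc n a' u'" "injd a' m e'"
    and "cdcomp n e u = cdcomp n e' u'"
  shows "a = a' \<and> e = e' \<and> u = u'"
proof -
  have "e ` {0..a} = e ` (u ` cube n)" using assms(1) by (simp add: surjc_def)
  also have "\<dots> = cdcomp n e u ` cube n" by (auto simp: cdcomp_def image_iff)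
  also have "\<dots> = cdcomp n e' u' ` cube n" using assms(5) by simp
  also have "\<dots> = e' ` (u' ` cube n)" by (auto simp: cdcomp_def image_iff)
  also have "\<dots> = e' ` {0..a'}" using assms(3) by (simp add: surjc_def)
  finally have im: "e ` {0..a} = e' ` {0..a'}" .
  from smono_same_image[OF injd_smono[OF assms(2)] injd_smono[OF assms(4)] im]
  have aa: "a = a'" and ee: "\<forall>i\<le>a. e i = e' i" by auto
  have eq: "e = e'" using ee aa assms(2,4) dhom_ext unfolding injd_def by blast
  have "u xs = u' xs" for xs
  proof (cases "xs \<in> cube n")
    case True
    have "e (u xs) = e' (u' xs)" using fun_cong[OF assms(5), of xs] True by (simp add: cdcomp_def)
    moreover have "u xs \<le> a" "u' xs \<le> a" using True assms(1,3) aa chom_le unfolding surjc_def by blast+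
    ultimately show ?thesis using eq injd_eq[OF assms(2)] by simp
  next
    case False then show ?thesis using assms(1,3) chom_zero[of u n a xs] chom_zero[of u' n a' xs] unfolding surjc_def by simp
  qed
  then show ?thesis using aa eq by auto
qed

lemma ss_cl: "sset X act \<Longrightarrow> f \<in> dhom k m \<Longrightarrow> x \<in> X m \<Longrightarrow> act m k f x \<in> X k"
  unfolding sset_def by blast
lemma ss_id: "sset X act \<Longrightarrow> x \<in> X m \<Longrightarrow> act m m (did m) x = x"
  unfolding sset_def by blast
lemma ss_comp: "sset X act \<Longrightarrow> f \<in> dhom k m \<Longrightarrow> g \<in> dhom j k \<Longrightarrow> x \<in> X m \<Longrightarrow>
    act k j g (act m k f x) = act m j (dcomp j f g) x"
  unfolding sset_def by blast

definition nondeg :: "(nat \<Rightarrow> 'a set) \<Rightarrow> (nat \<Rightarrow> nat \<Rightarrow> (nat \<Rightarrow> nat) \<Rightarrow> 'a \<Rightarrow> 'a) \<Rightarrow> nat \<Rightarrow> 'a \<Rightarrow> bool" where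
  "nondeg X act j z \<longleftrightarrow> z \<in> X j \<and> (\<forall>j' s w. surjd j j' s \<longrightarrow> w \<in> X j' \<longrightarrow> act j' j s w = z \<longrightarrow> j' = j)"

lemma nondeg_in: "nondeg X act j z \<Longrightarrow> z \<in> X j" by (simp add: nondeg_def)

lemma surjd_dhom: "surjd k j s \<Longrightarrow> s \<in> dhom k j" by (simp add: surjd_def)
lemma injd_dhom: "injd k j s \<Longrightarrow> s \<in> dhom k j" by (simp add: injd_def)

lemma surjd_le: assumes "surjd k j s" shows "j \<le> k"
proof -
  have "card {0..j} = card (s ` {0..k})" using assms by (simp add: surjd_def)
  also have "\<dots> \<le> card {0..k}" by (rule card_image_le) simp
  finally show ?thesis by simp
qed

lemma ez_exists:
  assumes ss: "sset Y act"
  shows "y \<in> Y k \<Longrightarrow> \<exists>j s z. surjd k j s \<and> nondeg Y act j z \<and> y = act j k s z"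
proof (induction k arbitrary: y rule: less_induct)
  case (less k)
  show ?case
  proof (cases "nondeg Y act k y")
    case True
    have "y = act k k (did k) y" using ss_id[where act=act, OF ss less.prems] by simp
    then show ?thesis using True did_surjd by blast
  next
    case False
    then obtain j' s w where sw: "surjd k j' s" "w \<in> Y j'" "act j' k s w = y" "j' \<noteq> k"
      using less.prems unfolding nondeg_def by blast
    have "j' < k" using surjd_le[OF sw(1)] sw(4) by simp
    from less.IH[OF this sw(2)] obtain j s2 z where
      z: "surjd j' j s2" "nondeg Y act j z" "w = act j j' s2 z" by blast
    have zin: "z \<in> Y j" using z(2) by (simp add: nondeg_def)
    have "y = act j' k s (act j j' s2 z)" using sw z by simp
    also have "\<dots> = act j k (dcomp k s2 s) z"
      by (rule ss_comp[where act=act, OF ss surjd_dhom[OF z(1)] surjd_dhom[OF sw(1)] zin])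
    finally have "y = act j k (dcomp k s2 s) z" .
    moreover have "surjd k j (dcomp k s2 s)" by (rule surjd_comp[OF sw(1) z(1)])
    ultimately show ?thesis using z(2) by blast
  qed
qed

lemma inj_le: assumes "inj_on c {0..j}" "c \<in> dhom j j'" shows "j \<le> j'"
proof -
  have "card {0..j} \<le> card {0..j'}"
  proof (rule card_inj_on_le[OF assms(1)])
    show "c ` {0..j} \<subseteq> {0..j'}" using dhom_le[OF assms(2)] by auto
  qed simp
  then show ?thesis by simp
qed

lemma nondeg_inj:
  assumes ss: "sset Y act" and nd: "nondeg Y act j z" and z': "z' \<in> Y j'"
    and c: "c \<in> dhom j j'" and eq: "z = act j' j c z'"
  shows "inj_on c {0..j}"
proof -
  obtain a e u where f: "surjd j a u" "injd a j' e" "c = dcomp j e u"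
    using factor_d[OF c] by blast
  have "z = act j' j (dcomp j e u) z'" using eq f(3) by simp
  also have "\<dots> = act a j u (act j' a e z')"
    using ss_comp[where act=act, OF ss injd_dhom[OF f(2)] surjd_dhom[OF f(1)] z'] by simp
  finally have zz: "act a j u (act j' a e z') = z" by simp
  have win: "act j' a e z' \<in> Y a" by (rule ss_cl[where act=act, OF ss injd_dhom[OF f(2)] z'])
  have aj: "a = j" using nd zz win f(1) unfolding nondeg_def by blast
  have "card (u ` {0..j}) = card {0..j}" using f(1) aj by (simp add: surjd_def)
  then have iu: "inj_on u {0..j}" by (rule eq_card_imp_inj_on[rotated]) simp
  show ?thesis
  proof (rule inj_onI)
    fix x y assume xy: "x \<in> {0..j}" "y \<in> {0..j}" "c x = c y"
    then have "e (u x) = e (u y)" using f(3) by (simp add: dcomp_def)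
    moreover have "u x \<le> a" "u y \<le> a" using xy dhom_le[OF surjd_dhom[OF f(1)]] by auto
    ultimately have "u x = u y" using injd_eq[OF f(2)] by blast
    then show "x = y" using iu xy unfolding inj_on_def by blast
  qed
qed

lemma inj_endo_id: assumes "c \<in> dhom j j" "inj_on c {0..j}" shows "\<forall>i\<le>j. c i = i"
proof -
  have "injd j j c" using assms by (simp add: injd_def)
  then have "strict_mono_on {0..j} c" by (rule injd_smono)
  moreover have "\<forall>i\<le>j. c i \<le> j" using dhom_le[OF assms(1)] by blast
  ultimately show ?thesis by (rule smono_id)
qed

lemma le0: "0 \<le> (k::nat)" by simp

lemma ez_key:
  assumes ss: "sset Y act" and s: "surjd k j s" and s': "surjd k j' s'"
    and z: "z \<in> Y j" and z': "z' \<in> Y j'" and eq: "act j k s z = act j' k s' z'"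
    and d: "d \<in> dhom j k" "\<forall>i\<le>j. s (d i) = i"
  shows "z = act j' j (dcomp j s' d) z'"
proof -
  have "z = act j j (did j) z" using ss_id[where act=act, OF ss z] by simp
  also have "\<dots> = act j j (dcomp j s d) z" using dcomp_section[OF d] by simp
  also have "\<dots> = act k j d (act j k s z)" using ss_comp[where act=act, OF ss surjd_dhom[OF s] d(1) z] by simp
  also have "\<dots> = act k j d (act j' k s' z')" using eq by simp
  also have "\<dots> = act j' j (dcomp j s' d) z'" using ss_comp[where act=act, OF ss surjd_dhom[OF s'] d(1) z'] by simp
  finally show ?thesis .
qed

lemma ez_le:
  assumes ss: "sset Y act" and s: "surjd k j s" and s': "surjd k j' s'"
    and z: "nondeg Y act j z" and z': "nondeg Y act j' z'" and eq: "act j k s z = act j' k s' z'"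
  shows "j \<le> j'"
proof -
  obtain d where d: "d \<in> dhom j k" "\<forall>i\<le>j. s (d i) = i"
    using section_exists[OF s le0[of k]] by blast
  have zi: "z \<in> Y j" "z' \<in> Y j'" using nondeg_in[OF z] nondeg_in[OF z'] by auto
  have cd: "dcomp j s' d \<in> dhom j j'" by (rule dcomp_dhom[OF d(1) surjd_dhom[OF s']])
  have "z = act j' j (dcomp j s' d) z'" by (rule ez_key[where act=act, OF ss s s' zi eq d])
  from nondeg_inj[where act=act, OF ss z zi(2) cd this] have "inj_on (dcomp j s' d) {0..j}" .
  then show ?thesis using inj_le[OF _ cd] by blast
qed

lemma ez_unique:
  assumes ss: "sset Y act" and s: "surjd k j s" and s': "surjd k j' s'"
    and z: "nondeg Y act j z" and z': "nondeg Y act j' z'" and eq: "act j k s z = act j' k s' z'"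
  shows "j = j' \<and> z = z' \<and> s = s'"
proof -
  have jj: "j = j'" using ez_le[where act=act, OF ss s s' z z' eq] ez_le[where act=act, OF ss s' s z' z eq[symmetric]] by simp
  have zi: "z \<in> Y j" "z' \<in> Y j'" using nondeg_in[OF z] nondeg_in[OF z'] by auto
  have cid: "\<forall>i\<le>j. dcomp j s' d i = i" if d: "d \<in> dhom j k" "\<forall>i\<le>j. s (d i) = i" for d
  proof -
    have cd: "dcomp j s' d \<in> dhom j j" using dcomp_dhom[OF d(1) surjd_dhom[OF s']] jj by simp
    have "z = act j' j (dcomp j s' d) z'" by (rule ez_key[where act=act, OF ss s s' zi eq d])
    from nondeg_inj[where act=act, OF ss z zi(2) _ this] cd jj have "inj_on (dcomp j s' d) {0..j}" by simp
    then show ?thesis using inj_endo_id cd by blast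
  qed
  have ss': "s i0 = s' i0" if i0k: "i0 \<le> k" for i0
  proof -
    obtain d where d: "d \<in> dhom j k" "\<forall>i\<le>j. s (d i) = i" "d (s i0) = i0"
      using section_exists[OF s i0k] by blast
    have "s i0 \<le> j" using dhom_le[OF surjd_dhom[OF s] i0k] .
    then have "dcomp j s' d (s i0) = s i0" using cid[OF d(1,2)] by blast
    then show ?thesis using \<open>s i0 \<le> j\<close> d(3) by (simp add: dcomp_def)
  qed
  have seq: "s = s'" using dhom_ext[OF surjd_dhom[OF s] surjd_dhom[OF s'] ss'] .
  obtain d where d: "d \<in> dhom j k" "\<forall>i\<le>j. s (d i) = i"
    using section_exists[OF s le0[of k]] by blast
  have "dcomp j s' d = did j"
  proof (rule ext)
    fix i show "dcomp j s' d i = did j i" using cid[OF d] by (simp add: did_def dcomp_def)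
  qed
  moreover have "z = act j' j (dcomp j s' d) z'" by (rule ez_key[where act=act, OF ss s s' zi eq d])
  ultimately have "z = z'" using ss_id[where act=act, OF ss zi(2)] jj by simp
  then show ?thesis using jj seq by simp
qed

lemma genI: "g \<in> dhom m k \<Longrightarrow> x \<in> X k \<Longrightarrow> f \<in> chom n m \<Longrightarrow>
   ((m, act k m g x, f), (k, x, cdcomp n g f)) \<in> coend_gen X act n"
  unfolding coend_gen_def by blast

lemma genE:
  assumes "(a, b) \<in> coend_gen X act n"
  obtains m k g x f where "a = (m, act k m g x, f)" "b = (k, x, cdcomp n g f)"
    "g \<in> dhom m k" "x \<in> X k" "f \<in> chom n m"
  using assms unfolding coend_gen_def by blast

lemma carrierI: "x \<in> X m \<Longrightarrow> f \<in> chom n m \<Longrightarrow> (m, x, f) \<in> coend_carrier X n"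
  unfolding coend_carrier_def by blast

lemma carrierE:
  assumes "a \<in> coend_carrier X n"
  obtains m x f where "a = (m, x, f)" "x \<in> X m" "f \<in> chom n m"
  using assms unfolding coend_carrier_def by blast

lemma gen_carrier:
  assumes ss: "sset X act" and ab: "(a, b) \<in> coend_gen X act n"
  shows "a \<in> coend_carrier X n \<and> b \<in> coend_carrier X n"
proof -
  obtain m k g x f where e: "a = (m, act k m g x, f)" "b = (k, x, cdcomp n g f)"
    "g \<in> dhom m k" "x \<in> X k" "f \<in> chom n m" using genE[OF ab] by blast
  have "act k m g x \<in> X m" by (rule ss_cl[where act=act, OF ss e(3) e(4)])
  moreover have "cdcomp n g f \<in> chom n k" by (rule cdcomp_chom[OF e(5) e(3)])
  ultimately show ?thesis using e carrierI by metis
qed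

lemma rel_carrier:
  assumes ss: "sset X act" and ab: "(a, b) \<in> coend_rel X act n"
  shows "a \<in> coend_carrier X n \<and> b \<in> coend_carrier X n"
proof -
  let ?G = "coend_gen X act n"
  have "(a, b) \<in> (?G \<union> ?G\<inverse>)\<^sup>+ \<Longrightarrow> a \<in> coend_carrier X n \<and> b \<in> coend_carrier X n"
  proof (induction rule: trancl_induct)
    case (base y) then show ?case using gen_carrier[where act=act, OF ss] by blast
  next
    case (step y z) then show ?case using gen_carrier[where act=act, OF ss] by blast
  qed
  then show ?thesis using ab unfolding coend_rel_def by (auto simp: Id_on_def)
qed

lemma rel_refl: "a \<in> coend_carrier X n \<Longrightarrow> (a, a) \<in> coend_rel X act n"
  unfolding coend_rel_def by auto

lemma rel_gen: "(a, b) \<in> coend_gen X act n \<Longrightarrow> (a, b) \<in> coend_rel X act n"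
  unfolding coend_rel_def by auto

lemma rel_sym: assumes "(a, b) \<in> coend_rel X act n" shows "(b, a) \<in> coend_rel X act n"
proof -
  let ?G = "coend_gen X act n"
  have c: "(?G \<union> ?G\<inverse>)\<inverse> = ?G \<union> ?G\<inverse>" by auto
  have "(a, b) \<in> (?G \<union> ?G\<inverse>)\<^sup>+ \<Longrightarrow> (b, a) \<in> (?G \<union> ?G\<inverse>)\<^sup>+"
  proof -
    assume "(a, b) \<in> (?G \<union> ?G\<inverse>)\<^sup>+"
    then have "(b, a) \<in> ((?G \<union> ?G\<inverse>)\<^sup>+)\<inverse>" by simp
    then have "(b, a) \<in> ((?G \<union> ?G\<inverse>)\<inverse>)\<^sup>+" by (simp only: trancl_converse)
    then show "(b, a) \<in> (?G \<union> ?G\<inverse>)\<^sup>+" by (simp only: c)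
  qed
  then show ?thesis using assms unfolding coend_rel_def by auto
qed

lemma rel_trans: assumes "(a, b) \<in> coend_rel X act n" "(b, c) \<in> coend_rel X act n"
  shows "(a, c) \<in> coend_rel X act n"
proof -
  let ?T = "(coend_gen X act n \<union> (coend_gen X act n)\<inverse>)\<^sup>+"
  have "(a, b) \<in> Id_on (coend_carrier X n) \<or> (a, b) \<in> ?T" using assms(1) unfolding coend_rel_def by blast
  moreover have "(b, c) \<in> Id_on (coend_carrier X n) \<or> (b, c) \<in> ?T" using assms(2) unfolding coend_rel_def by blast
  ultimately show ?thesis unfolding coend_rel_def
    by (auto simp: Id_on_def intro: trancl_trans)
qed

definition nf :: "(nat \<Rightarrow> 'a set) \<Rightarrow> (nat \<Rightarrow> nat \<Rightarrow> (nat \<Rightarrow> nat) \<Rightarrow> 'a \<Rightarrow> 'a) \<Rightarrow> nat \<Rightarrow>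
   (nat \<times> 'a \<times> (bool list \<Rightarrow> nat)) \<Rightarrow> (nat \<times> 'a \<times> (bool list \<Rightarrow> nat)) \<Rightarrow> bool" where
  "nf Y act n a b \<longleftrightarrow> (\<exists>m y f j z \<phi> k e f0 s. a = (m, y, f) \<and> b = (j, z, \<phi>) \<and> y \<in> Y m \<and> f \<in> chom n m
     \<and> nondeg Y act j z \<and> injd k m e \<and> surjc n k f0 \<and> surjd k j s \<and> f = cdcomp n e f0
     \<and> act m k e y = act j k s z \<and> \<phi> = cdcomp n s f0)"

lemma nf_exists:
  assumes ss: "sset Y act" and a: "a \<in> coend_carrier Y n"
  shows "\<exists>b. nf Y act n a b"
proof -
  obtain m y f where a': "a = (m, y, f)" "y \<in> Y m" "f \<in> chom n m" using carrierE[OF a] by blast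
  obtain k e f0 where fa: "surjc n k f0" "injd k m e" "f = cdcomp n e f0"
    using factor_c[OF a'(3)] by blast
  have "act m k e y \<in> Y k" by (rule ss_cl[where act=act, OF ss injd_dhom[OF fa(2)] a'(2)])
  from ez_exists[where act=act, OF ss this] obtain j s z where
    ez: "surjd k j s" "nondeg Y act j z" "act m k e y = act j k s z" by blast
  have "nf Y act n a (j, z, cdcomp n s f0)"
    unfolding nf_def using a' fa ez by blast
  then show ?thesis by blast
qed

lemma nf_sound:
  assumes ss: "sset Y act" and ab: "nf Y act n a b"
  shows "(a, b) \<in> coend_rel Y act n"
proof -
  obtain m y f j z \<phi> k e f0 s where d: "a = (m, y, f)" "b = (j, z, \<phi>)" "y \<in> Y m" "f \<in> chom n m"
     "nondeg Y act j z" "injd k m e" "surjc n k f0" "surjd k j s" "f = cdcomp n e f0"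
     "act m k e y = act j k s z" "\<phi> = cdcomp n s f0"
    using ab unfolding nf_def by blast
  have f0: "f0 \<in> chom n k" using d(7) by (simp add: surjc_def)
  have g1: "((k, act m k e y, f0), (m, y, cdcomp n e f0)) \<in> coend_gen Y act n"
    by (rule genI[where act=act and X=Y, OF injd_dhom[OF d(6)] d(3) f0])
  have g2: "((k, act j k s z, f0), (j, z, cdcomp n s f0)) \<in> coend_gen Y act n"
    by (rule genI[where act=act and X=Y, OF surjd_dhom[OF d(8)] nondeg_in[OF d(5)] f0])
  have r1: "(a, (k, act m k e y, f0)) \<in> coend_rel Y act n"
    using rel_sym[OF rel_gen[OF g1]] d(1) d(9) by simp
  have r2: "((k, act m k e y, f0), b) \<in> coend_rel Y act n"
    using rel_gen[OF g2] d(2) d(10) d(11) by simp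
  show ?thesis by (rule rel_trans[OF r1 r2])
qed

lemma nf_unique:
  assumes ss: "sset Y act" and ab: "nf Y act n a b" and ab': "nf Y act n a b'"
  shows "b = b'"
proof -
  obtain m y f j z \<phi> k e f0 s where d: "a = (m, y, f)" "b = (j, z, \<phi>)" "y \<in> Y m" "f \<in> chom n m"
     "nondeg Y act j z" "injd k m e" "surjc n k f0" "surjd k j s" "f = cdcomp n e f0"
     "act m k e y = act j k s z" "\<phi> = cdcomp n s f0"
    using ab unfolding nf_def by blast
  obtain m' y' f' j' z' \<phi>' k' e' f0' s' where d': "a = (m', y', f')" "b' = (j', z', \<phi>')" "y' \<in> Y m'" "f' \<in> chom n m'"
     "nondeg Y act j' z'" "injd k' m' e'" "surjc n k' f0'" "surjd k' j' s'" "f' = cdcomp n e' f0'"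
     "act m' k' e' y' = act j' k' s' z'" "\<phi>' = cdcomp n s' f0'"
    using ab' unfolding nf_def by blast
  have eqs: "m' = m" "y' = y" "f' = f" using d(1) d'(1) by auto
  have "cdcomp n e f0 = cdcomp n e' f0'" using d(9) d'(9) eqs by simp
  from factor_c_unique[OF d(7) d(6) d'(7) _ this] d'(6) eqs
  have u: "k = k'" "e = e'" "f0 = f0'" by auto
  have "act j k s z = act j' k s' z'" using d(10) d'(10) eqs u by simp
  from ez_unique[where act=act, OF ss d(8) _ d(5) d'(5) this] d'(8) u
  have "j = j' \<and> z = z' \<and> s = s'" by simp
  then show ?thesis using d(2) d'(2) d(11) d'(11) u by simp
qed

lemma nf_gen:
  assumes ss: "sset Y act" and g: "(a, a') \<in> coend_gen Y act n" and nb: "nf Y act n a' b"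
  shows "nf Y act n a b"
proof -
  obtain m k g x f where ge: "a = (m, act k m g x, f)" "a' = (k, x, cdcomp n g f)"
    "g \<in> dhom m k" "x \<in> Y k" "f \<in> chom n m" using genE[OF g] by blast
  obtain m1 y1 f1 j z \<phi> k' e' f0' s' where d: "a' = (m1, y1, f1)" "b = (j, z, \<phi>)" "y1 \<in> Y m1" "f1 \<in> chom n m1"
     "nondeg Y act j z" "injd k' m1 e'" "surjc n k' f0'" "surjd k' j s'" "f1 = cdcomp n e' f0'"
     "act m1 k' e' y1 = act j k' s' z" "\<phi> = cdcomp n s' f0'"
    using nb unfolding nf_def by blast
  have m1: "m1 = k" "y1 = x" "f1 = cdcomp n g f" using ge(2) d(1) by auto
  obtain p e f0 where fa: "surjc n p f0" "injd p m e" "f = cdcomp n e f0"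
    using factor_c[OF ge(5)] by blast
  have f0: "f0 \<in> chom n p" using fa(1) by (simp add: surjc_def)
  have ge_d: "dcomp p g e \<in> dhom p k" by (rule dcomp_dhom[OF injd_dhom[OF fa(2)] ge(3)])
  obtain q e2 t where fd: "surjd p q t" "injd q k e2" "dcomp p g e = dcomp p e2 t"
    using factor_d[OF ge_d] by blast
  have "cdcomp n g f = cdcomp n g (cdcomp n e f0)" using fa(3) by simp
  also have "\<dots> = cdcomp n (dcomp p g e) f0" by (rule cdcomp_assoc[OF f0])
  also have "\<dots> = cdcomp n (dcomp p e2 t) f0" using fd(3) by simp
  also have "\<dots> = cdcomp n e2 (cdcomp n t f0)" by (rule cdcomp_assoc[OF f0, symmetric])
  finally have c1: "cdcomp n e2 (cdcomp n t f0) = cdcomp n e' f0'" using d(9) m1 by simp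
  have sc: "surjc n q (cdcomp n t f0)" by (rule surjc_comp[OF fa(1) fd(1)])
  have e'k: "injd k' k e'" using d(6) m1 by simp
  from factor_c_unique[OF sc fd(2) d(7) e'k c1]
  have u: "q = k'" "e2 = e'" "cdcomp n t f0 = f0'" by auto
  have "act m p e (act k m g x) = act k p (dcomp p g e) x"
    by (rule ss_comp[where act=act, OF ss ge(3) injd_dhom[OF fa(2)] ge(4)])
  also have "\<dots> = act k p (dcomp p e2 t) x" using fd(3) by simp
  also have "\<dots> = act q p t (act k q e2 x)"
    by (rule ss_comp[where act=act, OF ss injd_dhom[OF fd(2)] surjd_dhom[OF fd(1)] ge(4), symmetric])
  also have "\<dots> = act q p t (act j q s' z)" using d(10) m1 u by simp
  also have "\<dots> = act j p (dcomp p s' t) z"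
  proof -
    have t': "t \<in> dhom p k'" using surjd_dhom[OF fd(1)] u(1) by simp
    show ?thesis using ss_comp[where act=act, OF ss surjd_dhom[OF d(8)] t' nondeg_in[OF d(5)]] u by simp
  qed
  finally have c2: "act m p e (act k m g x) = act j p (dcomp p s' t) z" .
  have sj: "surjd p j (dcomp p s' t)" using surjd_comp[OF fd(1)] d(8) u by simp
  have "\<phi> = cdcomp n s' (cdcomp n t f0)" using d(11) u by simp
  also have "\<dots> = cdcomp n (dcomp p s' t) f0" by (rule cdcomp_assoc[OF f0])
  finally have c3: "\<phi> = cdcomp n (dcomp p s' t) f0" .
  have y: "act k m g x \<in> Y m" by (rule ss_cl[where act=act, OF ss ge(3) ge(4)])
  show ?thesis unfolding nf_def
    using ge(1) d(2) y ge(5) d(5) fa(2) fa(1) sj fa(3) c2 c3 by blast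
qed

definition NF where "NF Y act n a = (THE b. nf Y act n a b)"

lemma NF_nf: assumes ss: "sset Y act" and a: "a \<in> coend_carrier Y n"
  shows "nf Y act n a (NF Y act n a)"
proof -
  have "\<exists>!b. nf Y act n a b" using nf_exists[where act=act, OF ss a] nf_unique[where act=act, OF ss] by blast
  then show ?thesis unfolding NF_def by (rule theI')
qed

lemma NF_eq: assumes ss: "sset Y act" and ab: "nf Y act n a b" shows "NF Y act n a = b"
  unfolding NF_def
proof (rule the_equality)
  show "nf Y act n a b" by (rule ab)
next
  fix x assume "nf Y act n a x"
  then show "x = b" using nf_unique[where act=act, OF ss _ ab] by blast
qed

lemma NF_gen: assumes ss: "sset Y act" and g: "(a, a') \<in> coend_gen Y act n"
  shows "NF Y act n a = NF Y act n a'"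
proof -
  have "a' \<in> coend_carrier Y n" using gen_carrier[where act=act, OF ss g] by blast
  from NF_nf[where act=act, OF ss this] have "nf Y act n a' (NF Y act n a')" .
  from nf_gen[where act=act, OF ss g this] have "nf Y act n a (NF Y act n a')" .
  then show ?thesis by (rule NF_eq[where act=act, OF ss])
qed

lemma NF_rel: assumes ss: "sset Y act" and r: "(a, a') \<in> coend_rel Y act n"
  shows "NF Y act n a = NF Y act n a'"
proof -
  let ?G = "coend_gen Y act n"
  have "(a, a') \<in> (?G \<union> ?G\<inverse>)\<^sup>+ \<Longrightarrow> NF Y act n a = NF Y act n a'"
  proof (induction rule: trancl_induct)
    case (base y) then show ?case using NF_gen[where act=act, OF ss] by (metis UnE converseD)
  next
    case (step y z)
    then have "NF Y act n y = NF Y act n z" using NF_gen[where act=act, OF ss] by (metis UnE converseD)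
    then show ?case using step.IH by simp
  qed
  then show ?thesis using r unfolding coend_rel_def by (auto simp: Id_on_def)
qed

lemma hom_cl: "sset_hom X actX Y actY h \<Longrightarrow> x \<in> X m \<Longrightarrow> h m x \<in> Y m"
  unfolding sset_hom_def by blast
lemma hom_nat: "sset_hom X actX Y actY h \<Longrightarrow> f \<in> dhom k m \<Longrightarrow> x \<in> X m \<Longrightarrow>
   h k (actX m k f x) = actY m k f (h m x)"
  unfolding sset_hom_def by blast

definition Hf :: "(nat \<Rightarrow> 'a \<Rightarrow> 'b) \<Rightarrow> nat \<times> 'a \<times> (bool list \<Rightarrow> nat) \<Rightarrow> nat \<times> 'b \<times> (bool list \<Rightarrow> nat)" where
  "Hf h p = (fst p, h (fst p) (fst (snd p)), snd (snd p))"

lemma Hf_simp[simp]: "Hf h (m, x, f) = (m, h m x, f)" by (simp add: Hf_def)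

lemma gen_H:
  assumes hh: "sset_hom X actX Y actY h" and g: "(a, b) \<in> coend_gen X actX n"
  shows "(Hf h a, Hf h b) \<in> coend_gen Y actY n"
proof -
  obtain m k g x f where ge: "a = (m, actX k m g x, f)" "b = (k, x, cdcomp n g f)"
    "g \<in> dhom m k" "x \<in> X k" "f \<in> chom n m" using genE[OF g] by blast
  have "((m, actY k m g (h k x), f), (k, h k x, cdcomp n g f)) \<in> coend_gen Y actY n"
    by (rule genI[where act=actY and X=Y, OF ge(3) hom_cl[OF hh ge(4)] ge(5)])
  moreover have "h m (actX k m g x) = actY k m g (h k x)" by (rule hom_nat[OF hh ge(3) ge(4)])
  ultimately show ?thesis using ge by simp
qed

lemma carrier_H:
  assumes hh: "sset_hom X actX Y actY h" and a: "a \<in> coend_carrier X n"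
  shows "Hf h a \<in> coend_carrier Y n"
proof -
  obtain m x f where a': "a = (m, x, f)" "x \<in> X m" "f \<in> chom n m" using carrierE[OF a] by blast
  show ?thesis using a' carrierI[where X=Y, OF hom_cl[OF hh a'(2)] a'(3)] by simp
qed

lemma rel_H:
  assumes hh: "sset_hom X actX Y actY h" and r: "(a, b) \<in> coend_rel X actX n"
  shows "(Hf h a, Hf h b) \<in> coend_rel Y actY n"
proof -
  let ?G = "coend_gen X actX n"
  have st: "(Hf h y, Hf h z) \<in> coend_rel Y actY n" if "(y, z) \<in> ?G \<union> ?G\<inverse>" for y z
  proof (cases "(y, z) \<in> ?G")
    case True then show ?thesis using rel_gen[OF gen_H[OF hh True]] by simp
  next
    case False then have "(z, y) \<in> ?G" using that by auto
    then show ?thesis using rel_sym[OF rel_gen[OF gen_H[OF hh]]] by blast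
  qed
  have "(a, b) \<in> (?G \<union> ?G\<inverse>)\<^sup>+ \<Longrightarrow> (Hf h a, Hf h b) \<in> coend_rel Y actY n"
  proof (induction rule: trancl_induct)
    case (base y) then show ?case by (rule st)
  next
    case (step y z) then show ?case using st rel_trans by blast
  qed
  moreover have "(Hf h a, Hf h b) \<in> coend_rel Y actY n" if ab: "(a, b) \<in> Id_on (coend_carrier X n)"
  proof -
    have "b = a" "a \<in> coend_carrier X n" using ab by (auto simp: Id_on_def)
    then show ?thesis using rel_refl[OF carrier_H[OF hh \<open>a \<in> coend_carrier X n\<close>]] by simp
  qed
  ultimately show ?thesis using r unfolding coend_rel_def by blast
qed

lemma nondeg_H:
  assumes sX: "sset X actX" and sY: "sset Y actY" and hm: "sset_mono X actX Y actY h"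
    and nd: "nondeg X actX j z"
  shows "nondeg Y actY j (h j z)"
proof -
  have hh: "sset_hom X actX Y actY h" and inj: "\<And>m. inj_on (h m) (X m)"
    using hm by (auto simp: sset_mono_def)
  have zX: "z \<in> X j" by (rule nondeg_in[OF nd])
  have "j' = j" if s: "surjd j j' s" and w: "w \<in> Y j'" and eq: "actY j' j s w = h j z" for j' s w
  proof -
    obtain d where d: "d \<in> dhom j' j" "\<forall>i\<le>j'. s (d i) = i"
      using section_exists[OF s le0[of j]] by blast
    have "w = actY j' j' (did j') w" using ss_id[where act=actY, OF sY w] by simp
    also have "\<dots> = actY j' j' (dcomp j' s d) w" using dcomp_section[OF d] by simp
    also have "\<dots> = actY j j' d (actY j' j s w)"
      using ss_comp[where act=actY, OF sY surjd_dhom[OF s] d(1) w] by simp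
    also have "\<dots> = actY j j' d (h j z)" using eq by simp
    also have "\<dots> = h j' (actX j j' d z)" using hom_nat[OF hh d(1) zX] by simp
    finally have w': "w = h j' (actX j j' d z)" .
    have w0: "actX j j' d z \<in> X j'" by (rule ss_cl[where act=actX, OF sX d(1) zX])
    have "h j z = actY j' j s (h j' (actX j j' d z))" using eq w' by simp
    also have "\<dots> = h j (actX j' j s (actX j j' d z))" using hom_nat[OF hh surjd_dhom[OF s] w0] by simp
    finally have "h j z = h j (actX j' j s (actX j j' d z))" .
    moreover have "actX j' j s (actX j j' d z) \<in> X j" by (rule ss_cl[where act=actX, OF sX surjd_dhom[OF s] w0])
    ultimately have "z = actX j' j s (actX j j' d z)" using inj[of j] zX unfolding inj_on_def by blast
    then have "actX j' j s (actX j j' d z) = z" by simp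
    then show "j' = j" using nd s w0 unfolding nondeg_def by blast
  qed
  then show ?thesis unfolding nondeg_def using hom_cl[OF hh zX] by blast
qed

lemma nf_H:
  assumes sX: "sset X actX" and sY: "sset Y actY" and hm: "sset_mono X actX Y actY h"
    and ab: "nf X actX n a b"
  shows "nf Y actY n (Hf h a) (Hf h b)"
proof -
  have hh: "sset_hom X actX Y actY h" using hm by (simp add: sset_mono_def)
  obtain m y f j z \<phi> k e f0 s where d: "a = (m, y, f)" "b = (j, z, \<phi>)" "y \<in> X m" "f \<in> chom n m"
     "nondeg X actX j z" "injd k m e" "surjc n k f0" "surjd k j s" "f = cdcomp n e f0"
     "actX m k e y = actX j k s z" "\<phi> = cdcomp n s f0"
    using ab unfolding nf_def by blast
  have "actY m k e (h m y) = h k (actX m k e y)" using hom_nat[OF hh injd_dhom[OF d(6)] d(3)] by simp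
  also have "\<dots> = h k (actX j k s z)" using d(10) by simp
  also have "\<dots> = actY j k s (h j z)" using hom_nat[OF hh surjd_dhom[OF d(8)] nondeg_in[OF d(5)]] by simp
  finally have c: "actY m k e (h m y) = actY j k s (h j z)" .
  have y: "h m y \<in> Y m" by (rule hom_cl[OF hh d(3)])
  have nd: "nondeg Y actY j (h j z)" by (rule nondeg_H[OF sX sY hm d(5)])
  show ?thesis unfolding nf_def using d y nd c by auto
qed

lemma Lmap_alt: "Lmap Y actY h n C = (\<Union>p\<in>C. coend_rel Y actY n `` {Hf h p})"
  unfolding Lmap_def by (auto simp: Hf_def split_beta)

theorem mainTheorem6:
  fixes X :: "nat \<Rightarrow> 'a set" and actX :: "nat \<Rightarrow> nat \<Rightarrow> (nat \<Rightarrow> nat) \<Rightarrow> 'a \<Rightarrow> 'a"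
    and Y :: "nat \<Rightarrow> 'b set" and actY :: "nat \<Rightarrow> nat \<Rightarrow> (nat \<Rightarrow> nat) \<Rightarrow> 'b \<Rightarrow> 'b"
    and h :: "nat \<Rightarrow> 'a \<Rightarrow> 'b"
  assumes "sset X actX" and "sset Y actY"
    and "sset_mono X actX Y actY h"
  shows "\<forall>n. inj_on (Lmap Y actY h n) (Lobj X actX n)"
proof
  fix n
  note sX = assms(1) and sY = assms(2) and hm = assms(3)
  have hh: "sset_hom X actX Y actY h" and inj: "\<And>m. inj_on (h m) (X m)"
    using hm by (auto simp: sset_mono_def)
  let ?RX = "coend_rel X actX n" and ?RY = "coend_rel Y actY n"
  show "inj_on (Lmap Y actY h n) (Lobj X actX n)"
  proof (rule inj_onI)
    fix C C' assume C: "C \<in> Lobj X actX n" and C': "C' \<in> Lobj X actX n"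
      and eq: "Lmap Y actY h n C = Lmap Y actY h n C'"
    obtain a where a: "a \<in> coend_carrier X n" "C = ?RX `` {a}"
      using C unfolding Lobj_def by (auto elim: quotientE)
    obtain a' where a': "a' \<in> coend_carrier X n" "C' = ?RX `` {a'}"
      using C' unfolding Lobj_def by (auto elim: quotientE)
    have "a \<in> C" using a rel_refl by blast
    moreover have "Hf h a \<in> ?RY `` {Hf h a}" using rel_refl[OF carrier_H[OF hh a(1)]] by blast
    ultimately have "Hf h a \<in> Lmap Y actY h n C" unfolding Lmap_alt by blast
    then have "Hf h a \<in> Lmap Y actY h n C'" using eq by simp
    then obtain p where p: "p \<in> C'" "(Hf h p, Hf h a) \<in> ?RY" unfolding Lmap_alt by blast
    have "(a', p) \<in> ?RX" using p(1) a'(2) by blast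
    then have "(Hf h a', Hf h p) \<in> ?RY" by (rule rel_H[OF hh])
    then have r: "(Hf h a', Hf h a) \<in> ?RY" using p(2) rel_trans by blast
    have n1: "NF Y actY n (Hf h a) = Hf h (NF X actX n a)"
      by (rule NF_eq[where act=actY, OF sY nf_H[OF sX sY hm NF_nf[where act=actX, OF sX a(1)]]])
    have n2: "NF Y actY n (Hf h a') = Hf h (NF X actX n a')"
      by (rule NF_eq[where act=actY, OF sY nf_H[OF sX sY hm NF_nf[where act=actX, OF sX a'(1)]]])
    have hEq: "Hf h (NF X actX n a') = Hf h (NF X actX n a)"
      using NF_rel[where act=actY, OF sY r] n1 n2 by simp
    have nin: "fst (snd (NF X actX n b)) \<in> X (fst (NF X actX n b))" if "b \<in> coend_carrier X n" for b
    proof -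
      have "nf X actX n b (NF X actX n b)" by (rule NF_nf[where act=actX, OF sX that])
      then obtain j z \<phi> where "NF X actX n b = (j, z, \<phi>)" "nondeg X actX j z" unfolding nf_def by blast
      then show ?thesis using nondeg_in by fastforce
    qed
    have NFeq: "NF X actX n a' = NF X actX n a"
    proof -
      obtain j z \<phi> where na: "NF X actX n a = (j, z, \<phi>)" by (cases "NF X actX n a") auto
      obtain j' z' \<phi>' where na': "NF X actX n a' = (j', z', \<phi>')" by (cases "NF X actX n a'") auto
      have e: "j' = j" "h j' z' = h j z" "\<phi>' = \<phi>" using hEq na na' by auto
      have "z \<in> X j" using nin[OF a(1)] na by simp
      moreover have "z' \<in> X j" using nin[OF a'(1)] na' e(1) by simp
      ultimately have "z' = z" using inj[of j] e(2) e(1) unfolding inj_on_def by blast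
      then show ?thesis using na na' e by simp
    qed
    have ra: "(a, NF X actX n a) \<in> ?RX" by (rule nf_sound[where act=actX, OF sX NF_nf[where act=actX, OF sX a(1)]])
    have ra': "(a', NF X actX n a') \<in> ?RX" by (rule nf_sound[where act=actX, OF sX NF_nf[where act=actX, OF sX a'(1)]])
    have "(NF X actX n a, a') \<in> ?RX" using rel_sym[OF ra'] NFeq by simp
    then have aa: "(a, a') \<in> ?RX" by (rule rel_trans[OF ra])
    show "C = C'"
    proof
      show "C \<subseteq> C'" using a(2) a'(2) rel_trans[OF rel_sym[OF aa]] by blast
      show "C' \<subseteq> C" using a(2) a'(2) rel_trans[OF aa] by blast
    qed
  qed
qed

end
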